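(* Let $K\ge1$, $T\ge1$, $\ell_1,\dots,\ell_T\in[0,1]^K$, $\phi>1$, $\alpha>0$. For FlipFlop with parameters $\phi,\alpha$, the cumulative mixability gap of the flop regime satisfies \[ \big(\underline{\Delta}_T\big)^2\le\underline{V}_T\ln K+\big(1+\tfrac23\ln K\big)\underline{\Delta}_T. \]
   Context: Hedge setting: $K$ experts; in round $t$ the learner chooses a probability vector $w_t$, then $\ell_t$ is revealed and the learner suffers $h_t=\sum_kw_{t,k}\ell_{t,k}$. Write $L_{t,k}=\sum_{s=1}^t\ell_{s,k}$ ($L_{0,k}=0$), $L^*_t=\min_kL_{t,k}$. Exponential weights with learning rate $\eta\in(0,\infty]$ at time $t$: $w_{t,k}=e^{-\eta L_{t-1,k}}/\sum_je^{-\eta L_{t-1,j}}$ if $\eta<\infty$; for $\eta=\infty$, $w_t$ uniform on $\{k:L_{t-1,k}=L^*_{t-1}\}$. With learning rate $\eta_t$ in round $t$: mix loss $m_t=-\frac1{\eta_t}\ln\sum_kw_{t,k}e^{-\eta_t\ell_{t,k}}$ if $\eta_t<\infty$, $m_t=L^*_t-L^*_{t-1}$ if $\eta_t=\infty$; mixability gap $\delta_t=h_t-m_t$; loss variance $v_t=\sum_kw_{t,k}(\ell_{t,k}-h_t)^2$. FlipFlop with parameters $\phi>1,\alpha>0$: keeps accumulators $\overline{\Delta}$ (flip) and $\underline{\Delta}$ (flop), both initially $0$, starting in the flip regime. In round $t$: flip regime uses $\eta_t=\infty$; flop regime uses $\eta_t=\ln K/\underline{\Delta}_{t-1}$ ($=\infty$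 if $\underline{\Delta}_{t-1}=0$); weights are exponential weights with learning rate $\eta_t$ from $L_{t-1}$. After round $t$, $\delta_t$ is added to the current regime's accumulator. If in flip and $\overline{\Delta}_t>(\phi/\alpha)\underline{\Delta}_t$, switch to flop for round $t+1$; if in flop and $\underline{\Delta}_t>\alpha\overline{\Delta}_t$, switch to flip for round $t+1$. $\underline{\Delta}_T$ is the sum of $\delta_t$ over flop rounds $t\le T$, and $\underline{V}_T$ is the sum of $v_t$ over flop rounds $t\le T$. *)

theory Defs
  imports Complex_Main "HOL-Library.Extended_Real"
begin

text \<open>Experts are indexed by k < K; rounds by t = 1, 2, ...;
  l t k is the loss of expert k in round t. Learning rates live in ereal,
  with the value \<infinity> encoding the learning rate infinity.\<close>

definition cumloss :: "(nat \<Rightarrow> nat \<Rightarrow> real) \<Rightarrow> nat \<Rightarrow> nat \<Rightarrow> real" where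
  "cumloss l t k = (\<Sum>s=1..t. l s k)"

definition minloss :: "nat \<Rightarrow> (nat \<Rightarrow> nat \<Rightarrow> real) \<Rightarrow> nat \<Rightarrow> real" where
  "minloss K l t = Min ((\<lambda>k. cumloss l t k) ` {..<K})"

definition ew_weight :: "nat \<Rightarrow> (nat \<Rightarrow> nat \<Rightarrow> real) \<Rightarrow> ereal \<Rightarrow> nat \<Rightarrow> nat \<Rightarrow> real" where
  "ew_weight K l eta t k =
     (if eta = \<infinity> then
        (if cumloss l (t - 1) k = minloss K l (t - 1)
         then 1 / real (card {j. j < K \<and> cumloss l (t - 1) j = minloss K l (t - 1)})
         else 0)
      else exp (- real_of_ereal eta * cumloss l (t - 1) k) /
           (\<Sum>j<K. exp (- real_of_ereal eta * cumloss l (t - 1) j)))"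

definition hedge_loss :: "nat \<Rightarrow> (nat \<Rightarrow> nat \<Rightarrow> real) \<Rightarrow> ereal \<Rightarrow> nat \<Rightarrow> real" where
  "hedge_loss K l eta t = (\<Sum>k<K. ew_weight K l eta t k * l t k)"

definition mix_loss :: "nat \<Rightarrow> (nat \<Rightarrow> nat \<Rightarrow> real) \<Rightarrow> ereal \<Rightarrow> nat \<Rightarrow> real" where
  "mix_loss K l eta t =
     (if eta = \<infinity> then minloss K l t - minloss K l (t - 1)
      else - (1 / real_of_ereal eta) *
             ln (\<Sum>k<K. ew_weight K l eta t k * exp (- real_of_ereal eta * l t k)))"

definition mix_gap :: "nat \<Rightarrow> (nat \<Rightarrow> nat \<Rightarrow> real) \<Rightarrow> ereal \<Rightarrow> nat \<Rightarrow> real" where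
  "mix_gap K l eta t = hedge_loss K l eta t - mix_loss K l eta t"

definition loss_var :: "nat \<Rightarrow> (nat \<Rightarrow> nat \<Rightarrow> real) \<Rightarrow> ereal \<Rightarrow> nat \<Rightarrow> real" where
  "loss_var K l eta t = (\<Sum>k<K. ew_weight K l eta t k * (l t k - hedge_loss K l eta t)^2)"

text \<open>FlipFlop state after t rounds: (in_flip_regime_for_next_round, flip accumulator,
  flop accumulator, sum of loss variances over flop rounds).\<close>
fun flipflop_state :: "nat \<Rightarrow> (nat \<Rightarrow> nat \<Rightarrow> real) \<Rightarrow> real \<Rightarrow> real \<Rightarrow> nat \<Rightarrow> bool \<times> real \<times> real \<times> real" where
  "flipflop_state K l \<phi> \<alpha> 0 = (True, 0, 0, 0)"
| "flipflop_state K l \<phi> \<alpha> (Suc t) =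
     (let (fl, dflip, dflop, vflop) = flipflop_state K l \<phi> \<alpha> t;
          eta = (if fl then \<infinity> else if dflop = 0 then \<infinity> else ereal (ln (real K) / dflop));
          d = mix_gap K l eta (Suc t);
          v = loss_var K l eta (Suc t);
          dflip' = (if fl then dflip + d else dflip);
          dflop' = (if fl then dflop else dflop + d);
          vflop' = (if fl then vflop else vflop + v);
          fl' = (if fl then \<not> (dflip' > (\<phi> / \<alpha>) * dflop') else dflop' > \<alpha> * dflip')
      in (fl', dflip', dflop', vflop'))"

definition flop_gap :: "nat \<Rightarrow> (nat \<Rightarrow> nat \<Rightarrow> real) \<Rightarrow> real \<Rightarrow> real \<Rightarrow> nat \<Rightarrow> real" where
  "flop_gap K l \<phi> \<alpha> T = fst (snd (snd (flipflop_state K l \<phi> \<alpha> T)))"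

definition flop_var :: "nat \<Rightarrow> (nat \<Rightarrow> nat \<Rightarrow> real) \<Rightarrow> real \<Rightarrow> real \<Rightarrow> nat \<Rightarrow> real" where
  "flop_var K l \<phi> \<alpha> T = snd (snd (snd (flipflop_state K l \<phi> \<alpha> T)))"

end

theory Submission imports Defs begin
lemma fact_ge3: "2 * 3^n \<le> (fact (n+2) :: real)"
proof (induction n)
  case 0 then show ?case by simp
next
  case (Suc n)
  have "fact (Suc n + 2) = real (n+3) * (fact (n+2) :: real)"
    by (simp add: fact_Suc numeral_3_eq_3)
  moreover have "real (n+3) * fact (n+2) \<ge> 3 * (fact (n+2)::real)"
    by (rule mult_right_mono) auto
  ultimately show ?case using Suc.IH by (simp only: power_Suc)
qed

lemma exp_pos_bern:
  fixes u :: real assumes "0 \<le> u" "u < 3"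
  shows "exp u \<le> 1 + u + u^2 / (2 * (1 - u/3))"
proof -
  have s: "(\<lambda>n. u^n / fact n) sums exp u"
    using exp_converges[of u] by (simp add: divide_inverse mult.commute)
  have s2: "(\<lambda>n. u^(n+2) / fact (n+2)) sums (exp u - (\<Sum>n<2. u^n / fact n))"
    using sums_iff_shift[of "\<lambda>n. u^n / fact n" 2 "exp u - (\<Sum>n<2. u^n / fact n)"] s by simp
  have g: "(\<lambda>n. u^2/2 * (u/3)^n) sums (u^2/2 * (1 / (1 - u/3)))"
    by (intro sums_mult geometric_sums) (use assms in auto)
  have "exp u - (\<Sum>n<2. u^n / fact n) \<le> u^2/2 * (1 / (1 - u/3))"
  proof (rule sums_le[OF _ s2 g])
    fix n
    have "u^(n+2) / fact (n+2) \<le> u^(n+2) / (2*3^n)"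
      by (intro divide_left_mono fact_ge3) (use assms in auto)
    also have "\<dots> = u^2/2 * (u/3)^n" by (simp add: power_add power_divide power2_eq_square)
    finally show "u^(n+2) / fact (n+2) \<le> u^2/2 * (u/3)^n" .
  qed
  then show ?thesis by (simp add: eval_nat_numeral)
qed

lemma exp_neg_quad:
  fixes u :: real assumes "u \<le> 0"
  shows "exp u \<le> 1 + u + u^2/2"
proof (cases "u = 0")
  case True then show ?thesis by simp
next
  case False
  obtain t where "exp u = (\<Sum>m<3. (u ^ m) / fact m) + (exp t / fact 3) * u ^ 3"
    using Maclaurin_exp_lt[OF False, of 3] by auto
  moreover have "u^3 \<le> 0"
  proof -
    have "0 \<le> u*u" by simp
    then have "u*u*u \<le> 0" using assms by (rule mult_nonneg_nonpos)
    then show ?thesis by (simp add: power3_eq_cube)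
  qed
  moreover have "exp t / fact 3 * u^3 \<le> 0" using calculation(2) by (intro mult_nonneg_nonpos) auto
  ultimately show ?thesis by (simp add: eval_nat_numeral)
qed

lemma exp_bern:
  fixes u e :: real assumes "u \<le> e" "e < 3" "0 \<le> e"
  shows "exp u \<le> 1 + u + u^2 / (2 * (1 - e/3))"
proof (cases "u \<le> 0")
  case True
  have "u^2/2 \<le> u^2 / (2 * (1 - e/3))"
    by (intro divide_left_mono) (use assms in auto)
  then show ?thesis using exp_neg_quad[OF True] by linarith
next
  case False
  then have "exp u \<le> 1 + u + u^2 / (2 * (1 - u/3))" using exp_pos_bern assms by auto
  also have "u^2 / (2 * (1 - u/3)) \<le> u^2 / (2 * (1 - e/3))"
    using assms False by (intro divide_left_mono) auto
  finally show ?thesis by simp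
qed

lemma gap_abs:
  fixes w x :: "nat \<Rightarrow> real" and A :: "nat set" and e :: real
  assumes fin: "finite A" and e: "0 < e"
    and w0: "\<And>k. k \<in> A \<Longrightarrow> 0 \<le> w k" and w1: "sum w A = 1"
    and x01: "\<And>k. k \<in> A \<Longrightarrow> 0 \<le> x k \<and> x k \<le> 1"
    and h_def: "h = (\<Sum>k\<in>A. w k * x k)"
    and S_def: "S = (\<Sum>k\<in>A. w k * exp (- e * x k))"
    and v_def: "v = (\<Sum>k\<in>A. w k * (x k - h)^2)"
  shows "0 \<le> h + ln S / e" "h + ln S / e \<le> 1"
    "e < 3 \<Longrightarrow> (h + ln S / e) * (1 - e/3) \<le> e * v / 2"
proof -
  define R where "R = (\<Sum>k\<in>A. w k * exp (e * (h - x k)))"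
  have h1: "h \<le> 1"
  proof -
    have "h \<le> (\<Sum>k\<in>A. w k * 1)" unfolding h_def
      using w0 x01 by (intro sum_mono mult_left_mono) auto
    then show ?thesis using w1 by simp
  qed
  have hw: "(\<Sum>k\<in>A. w k * (h - x k)) = 0"
    by (simp add: right_diff_distrib sum_subtractf sum_distrib_right[symmetric] w1 h_def)
  have SR: "S = exp (- e * h) * R"
    unfolding S_def R_def sum_distrib_left
    by (intro sum.cong refl) (simp add: algebra_simps exp_add[symmetric])
  have R1: "1 \<le> R"
  proof -
    have "(\<Sum>k\<in>A. w k * (1 + e * (h - x k))) \<le> R" unfolding R_def
      using w0 by (intro sum_mono mult_left_mono) auto
    moreover have "(\<Sum>k\<in>A. w k * (1 + e * (h - x k))) = 1"
    proof -
      have "(\<Sum>k\<in>A. w k * (1 + e * (h - x k))) = sum w A + e * (\<Sum>k\<in>A. w k * (h - x k))"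
        unfolding sum_distrib_left sum.distrib[symmetric] by (intro sum.cong) (auto simp: algebra_simps)
      then show ?thesis using hw w1 by simp
    qed
    ultimately show ?thesis by simp
  qed
  have Rpos: "0 < R" using R1 by simp
  have lnS: "ln S = - e * h + ln R" using SR Rpos by (simp add: ln_mult)
  have gap: "h + ln S / e = ln R / e" using lnS e by (simp add: field_simps)
  show "0 \<le> h + ln S / e" using gap R1 e by simp
  have S1: "S \<le> 1"
  proof -
    have "S \<le> (\<Sum>k\<in>A. w k * 1)" unfolding S_def
      using w0 x01 e by (intro sum_mono mult_left_mono) auto
    then show ?thesis using w1 by simp
  qed
  have Spos: "0 < S" using SR Rpos by simp
  have "ln S \<le> 0" using S1 Spos by simp
  then have "ln S / e \<le> 0" using e by (simp add: divide_nonpos_pos)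
  then show "h + ln S / e \<le> 1" using h1 by linarith
  assume e3: "e < 3"
  define c where "c = 1 / (2 * (1 - e/3))"
  have "R \<le> (\<Sum>k\<in>A. w k * (1 + e * (h - x k) + (e * (h - x k))^2 / (2 * (1 - e/3))))"
    unfolding R_def
  proof (intro sum_mono mult_left_mono)
    fix k assume k: "k \<in> A"
    have "e * (h - x k) \<le> e" using x01[OF k] h1 e by (simp add: mult_left_le)
    then show "exp (e * (h - x k)) \<le> 1 + e * (h - x k) + (e * (h - x k))^2 / (2 * (1 - e/3))"
      using exp_bern e e3 by auto
  qed (use w0 in auto)
  also have "\<dots> = (\<Sum>k\<in>A. w k + e * (w k * (h - x k)) + c * e^2 * (w k * (x k - h)^2))"
    using e3 by (intro sum.cong refl) (simp add: c_def field_simps power2_eq_square)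
  also have "\<dots> = sum w A + e * (\<Sum>k\<in>A. w k * (h - x k)) + c * e^2 * v"
    by (simp add: sum.distrib sum_distrib_left v_def)
  finally have "R \<le> 1 + c * e^2 * v" using hw w1 by simp
  then have "ln R \<le> c * e^2 * v" using ln_le_minus_one[OF Rpos] by linarith
  then have "ln R / e \<le> c * e * v" using e by (simp add: divide_le_eq power2_eq_square algebra_simps)
  then have "ln R / e * (1 - e/3) \<le> c * e * v * (1 - e/3)"
    using e3 by (intro mult_right_mono) auto
  also have "\<dots> = e * v / 2" using e3 by (simp add: c_def field_simps)
  finally show "(h + ln S / e) * (1 - e/3) \<le> e * v / 2" using gap by simp
qed

lemma cumloss_step: "1 \<le> t \<Longrightarrow> cumloss l t k = cumloss l (t - 1) k + l t k"
  unfolding cumloss_def by (cases t) auto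
  

lemma fin_gap:
  fixes e :: real
  assumes K: "K \<ge> 1" and e: "0 < e" and x01: "\<And>k. k < K \<Longrightarrow> 0 \<le> l t k \<and> l t k \<le> 1"
  shows "0 \<le> mix_gap K l (ereal e) t" "mix_gap K l (ereal e) t \<le> 1"
    "0 \<le> loss_var K l (ereal e) t"
    "e < 3 \<Longrightarrow> mix_gap K l (ereal e) t * (1 - e/3) \<le> e * loss_var K l (ereal e) t / 2"
proof -
  define w where "w = ew_weight K l (ereal e) t"
  define Z where "Z = (\<Sum>j<K. exp (- e * cumloss l (t - 1) j))"
  have Zpos: "0 < Z" unfolding Z_def using K by (intro sum_pos) (auto simp: lessThan_empty_iff)
  have wdef: "w k = exp (- e * cumloss l (t - 1) k) / Z" for k
    unfolding w_def Z_def ew_weight_def by simp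
  have w0: "\<And>k. k \<in> {..<K} \<Longrightarrow> 0 \<le> w k" using Zpos by (simp add: wdef)
  have w1: "sum w {..<K} = 1" using Zpos by (simp add: wdef Z_def flip: sum_divide_distrib)
  have x01': "\<And>k. k \<in> {..<K} \<Longrightarrow> 0 \<le> l t k \<and> l t k \<le> 1" using x01 by auto
  note G = gap_abs[OF finite_lessThan e w0 w1 x01' refl refl refl]
  have gap: "mix_gap K l (ereal e) t = (\<Sum>k<K. w k * l t k) + ln (\<Sum>k<K. w k * exp (- e * l t k)) / e"
    unfolding mix_gap_def hedge_loss_def mix_loss_def w_def by simp
  have var: "loss_var K l (ereal e) t = (\<Sum>k<K. w k * (l t k - (\<Sum>k<K. w k * l t k))\<^sup>2)"
    unfolding loss_var_def hedge_loss_def w_def by simp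
  show "0 \<le> mix_gap K l (ereal e) t" "mix_gap K l (ereal e) t \<le> 1" using G gap by auto
  show "0 \<le> loss_var K l (ereal e) t" unfolding var using w0 by (intro sum_nonneg) auto
  show "e < 3 \<Longrightarrow> mix_gap K l (ereal e) t * (1 - e/3) \<le> e * loss_var K l (ereal e) t / 2"
    using G gap var by auto
qed

lemma inf_gap:
  assumes K: "K \<ge> 1" and t: "1 \<le> t" and x01: "\<And>k. k < K \<Longrightarrow> 0 \<le> l t k \<and> l t k \<le> 1"
  shows "0 \<le> mix_gap K l \<infinity> t" "mix_gap K l \<infinity> t \<le> 1"
    "0 \<le> loss_var K l \<infinity> t" "K = 1 \<Longrightarrow> mix_gap K l \<infinity> t = 0"
proof -
  define L where "L = cumloss l (t - 1)"
  define M where "M = minloss K l (t - 1)"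
  define Ld where "Ld = {j. j < K \<and> L j = M}"
  define C where "C = card Ld"
  have ne: "{..<K} \<noteq> {}" using K by (auto simp: lessThan_empty_iff)
  have Min_in: "M \<in> L ` {..<K}" unfolding M_def minloss_def L_def
    using ne by (intro Min_in) auto
  have Mle: "\<And>k. k < K \<Longrightarrow> M \<le> L k" unfolding M_def minloss_def L_def by auto
  have finLd: "finite Ld" unfolding Ld_def by auto
  have Ldne: "Ld \<noteq> {}" using Min_in unfolding Ld_def by auto
  have Cpos: "0 < C" unfolding C_def using finLd Ldne by (simp add: card_gt_0_iff)
  have wdef: "ew_weight K l \<infinity> t k = (if k < K \<and> L k = M then 1 / real C else 0)" if "k < K" for k
    using that unfolding ew_weight_def C_def Ld_def L_def M_def by simp
  have w0: "0 \<le> ew_weight K l \<infinity> t k" for k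
    unfolding ew_weight_def by simp
  have h: "hedge_loss K l \<infinity> t = (\<Sum>k\<in>Ld. l t k) / real C"
  proof -
    have "hedge_loss K l \<infinity> t = (\<Sum>k<K. if L k = M then l t k / real C else 0)"
      unfolding hedge_loss_def by (intro sum.cong refl) (simp add: wdef)
    also have "\<dots> = (\<Sum>k\<in>{k\<in>{..<K}. L k = M}. l t k / real C)"
      by (rule sum.inter_filter[symmetric]) simp
    also have "{k\<in>{..<K}. L k = M} = Ld" unfolding Ld_def by auto
    finally show ?thesis by (simp add: sum_divide_distrib)
  qed
  have cs: "cumloss l t k = L k + l t k" for k unfolding L_def using cumloss_step[OF t] .
  have mix: "mix_loss K l \<infinity> t = minloss K l t - M" unfolding mix_loss_def M_def by simp
  have Mt_ge: "M \<le> minloss K l t" unfolding minloss_def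
    using ne Mle x01 by (auto simp: cs intro!: Min.boundedI) (smt (verit))
  have Mt_le: "minloss K l t - M \<le> l t k" if "k \<in> Ld" for k
  proof -
    have "minloss K l t \<le> cumloss l t k" unfolding minloss_def using that Ld_def by auto
    then show ?thesis using that unfolding Ld_def cs by auto
  qed
  have "(\<Sum>k\<in>Ld. minloss K l t - M) \<le> (\<Sum>k\<in>Ld. l t k)" using Mt_le by (rule sum_mono)
  then have "real C * (minloss K l t - M) \<le> (\<Sum>k\<in>Ld. l t k)" by (simp add: C_def)
  then have A: "minloss K l t - M \<le> hedge_loss K l \<infinity> t" unfolding h using Cpos
    by (simp add: field_simps)
  have "(\<Sum>k\<in>Ld. l t k) \<le> (\<Sum>k\<in>Ld. 1)" using x01 unfolding Ld_def by (intro sum_mono) auto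
  then have "hedge_loss K l \<infinity> t \<le> 1" unfolding h using Cpos by (simp add: C_def field_simps)
  then show "0 \<le> mix_gap K l \<infinity> t" "mix_gap K l \<infinity> t \<le> 1"
    unfolding mix_gap_def mix using A Mt_ge by auto
  show "0 \<le> loss_var K l \<infinity> t" unfolding loss_var_def using w0 by (intro sum_nonneg) auto
  assume K1: "K = 1"
  have "minloss K l t = cumloss l t 0" "M = L 0" unfolding M_def minloss_def L_def K1 by (auto simp: lessThan_Suc)
  moreover have "Ld = {0}" using Ldne unfolding Ld_def K1 by auto
  ultimately show "mix_gap K l \<infinity> t = 0" unfolding mix_gap_def mix h C_def by (simp add: cs)
qed

lemma step_arith:
  fixes b c d v L e :: real
  assumes IH: "b^2 \<le> c * L + (1 + 2/3 * L) * b" and b: "0 \<le> b" and L: "0 \<le> L"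
    and d: "0 \<le> d" "d \<le> 1" and v: "0 \<le> v"
    and key: "2 * b * d \<le> v * L + 2/3 * L * d"
  shows "(b + d)^2 \<le> (c + v) * L + (1 + 2/3 * L) * (b + d)"
proof -
  have "d^2 \<le> d" using d by (simp add: power2_eq_square mult_left_le)
  moreover have "(c+v)*L + (1+2/3*L)*(b+d) = (c*L + (1+2/3*L)*b) + (v*L + 2/3*L*d) + d"
    by (simp add: algebra_simps)
  moreover have "(b+d)^2 = b^2 + 2*b*d + d^2" by (simp add: power2_eq_square algebra_simps)
  ultimately show ?thesis using IH key by (simp only: mult.commute[of c L])
qed

lemma invariant:
  fixes K T :: nat and l :: "nat \<Rightarrow> nat \<Rightarrow> real" and \<phi> \<alpha> :: real
  assumes K: "K \<ge> 1"
    and lb: "\<And>t k. 1 \<le> t \<Longrightarrow> t \<le> T \<Longrightarrow> k < K \<Longrightarrow> 0 \<le> l t k \<and> l t k \<le> 1"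
  shows "t \<le> T \<Longrightarrow> 0 \<le> flop_gap K l \<phi> \<alpha> t \<and> (K = 1 \<longrightarrow> flop_gap K l \<phi> \<alpha> t = 0) \<and>
     (flop_gap K l \<phi> \<alpha> t)\<^sup>2 \<le> flop_var K l \<phi> \<alpha> t * ln (real K)
           + (1 + 2/3 * ln (real K)) * flop_gap K l \<phi> \<alpha> t"
proof (induction t)
  case 0
  then show ?case by (simp add: flop_gap_def flop_var_def)
next
  case (Suc t)
  obtain fl a b c where st: "flipflop_state K l \<phi> \<alpha> t = (fl, a, b, c)" by (metis prod_cases4)
  have IH: "0 \<le> b" "K = 1 \<longrightarrow> b = 0" "b\<^sup>2 \<le> c * ln (real K) + (1 + 2/3 * ln (real K)) * b"
  proof -
    have e: "flop_gap K l \<phi> \<alpha> t = b" "flop_var K l \<phi> \<alpha> t = c"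
      by (simp_all add: flop_gap_def flop_var_def st)
    have "t \<le> T" using Suc.prems by simp
    from Suc.IH[OF this] show "0 \<le> b" "K = 1 \<longrightarrow> b = 0" "b\<^sup>2 \<le> c * ln (real K) + (1 + 2/3 * ln (real K)) * b"
      unfolding e by auto
  qed
  define eta where "eta = (if fl then \<infinity> else if b = 0 then \<infinity> else ereal (ln (real K) / b))"
  have gs: "flop_gap K l \<phi> \<alpha> (Suc t) = (if fl then b else b + mix_gap K l eta (Suc t))"
    unfolding flop_gap_def eta_def by (simp add: st Let_def)
  have vs: "flop_var K l \<phi> \<alpha> (Suc t) = (if fl then c else c + loss_var K l eta (Suc t))"
    unfolding flop_var_def eta_def by (simp add: st Let_def)
  have x01: "\<And>k. k < K \<Longrightarrow> 0 \<le> l (Suc t) k \<and> l (Suc t) k \<le> 1" using lb Suc.prems by auto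
  have L0: "0 \<le> ln (real K)" using K by simp
  show ?case
  proof (cases fl)
    case True
    then have e: "flop_gap K l \<phi> \<alpha> (Suc t) = b" "flop_var K l \<phi> \<alpha> (Suc t) = c"
      using gs vs by simp_all
    show ?thesis unfolding e using IH by simp
  next
    case False
    have t1: "1 \<le> Suc t" by simp
    show ?thesis
    proof (cases "b = 0")
      case True
      then have eta: "eta = \<infinity>" using False by (simp add: eta_def)
      note G = inf_gap[where l=l and t="Suc t", OF K t1 x01, folded eta]
      have "(b + mix_gap K l eta (Suc t))\<^sup>2 \<le> (c + loss_var K l eta (Suc t)) * ln (real K)
          + (1 + 2/3 * ln (real K)) * (b + mix_gap K l eta (Suc t))"
        by (rule step_arith[OF IH(3) IH(1) L0]) (use G True L0 in auto)
      then show ?thesis unfolding gs vs using G IH False True by auto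
    next
      case b0: False
      then have bpos: "0 < b" using IH by simp
      have K2: "K \<noteq> 1" using IH b0 by auto
      then have Lpos: "0 < ln (real K)" using K by simp
      define e where "e = ln (real K) / b"
      have epos: "0 < e" using Lpos bpos by (simp add: e_def)
      have eta: "eta = ereal e" using False b0 by (simp add: eta_def e_def)
      note G = fin_gap[where l=l and t="Suc t", OF K epos x01, folded eta]
      have Le: "ln (real K) = e * b" using bpos by (simp add: e_def)
      have key0: "mix_gap K l eta (Suc t) * (1 - e/3) \<le> e * loss_var K l eta (Suc t) / 2"
      proof (cases "e < 3")
        case True then show ?thesis using G by auto
      next
        case False
        have "mix_gap K l eta (Suc t) * (1 - e/3) \<le> 0" using G False
          by (intro mult_nonneg_nonpos) auto
        also have "0 \<le> e * loss_var K l eta (Suc t) / 2" using G epos by simp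
        finally show ?thesis .
      qed
      have "2 * b * mix_gap K l eta (Suc t) \<le> loss_var K l eta (Suc t) * ln (real K)
          + 2/3 * ln (real K) * mix_gap K l eta (Suc t)"
      proof -
        have "2 * b * (mix_gap K l eta (Suc t) * (1 - e/3)) \<le> 2 * b * (e * loss_var K l eta (Suc t) / 2)"
          using key0 bpos by (intro mult_left_mono) auto
        then show ?thesis unfolding Le by (simp add: algebra_simps)
      qed
      then have "(b + mix_gap K l eta (Suc t))\<^sup>2 \<le> (c + loss_var K l eta (Suc t)) * ln (real K)
          + (1 + 2/3 * ln (real K)) * (b + mix_gap K l eta (Suc t))"
        by (intro step_arith[OF IH(3) IH(1) L0]) (use G in auto)
      then show ?thesis unfolding gs vs using G IH False K2 by auto
    qed
  qed
qed

theorem lemma12: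
  fixes K T :: nat and l :: "nat \<Rightarrow> nat \<Rightarrow> real" and \<phi> \<alpha> :: real
  assumes "K \<ge> 1" and "T \<ge> 1"
    and "\<And>t k. 1 \<le> t \<Longrightarrow> t \<le> T \<Longrightarrow> k < K \<Longrightarrow> 0 \<le> l t k \<and> l t k \<le> 1"
    and "\<phi> > 1" and "\<alpha> > 0"
  shows "(flop_gap K l \<phi> \<alpha> T)\<^sup>2 \<le> flop_var K l \<phi> \<alpha> T * ln (real K)
           + (1 + 2/3 * ln (real K)) * flop_gap K l \<phi> \<alpha> T"
  using invariant[OF assms(1) assms(3), of T] by auto
end
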